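(* Let $X$ be a $G$-space with $\mathrm{TC}^{G,\infty}(X)=0$. Then the orbit map $\rho_X\colon X\to X/G$ is nullhomotopic.
   Context: All spaces are well-pointed CW complexes, $G$ a topological group acting cellularly. $PX$ is the path space; $\mathcal{P}_k(X)=\{(\gamma_1,\dots,\gamma_k)\in(PX)^k\mid G\gamma_i(1)=G\gamma_{i+1}(0),\ 1\le i\le k-1\}$, $\pi_k\colon\mathcal{P}_k(X)\to X\times X$, $\pi_k(\gamma_1,\dots,\gamma_k)=(\gamma_1(0),\gamma_k(1))$. $\mathrm{secat}(f)$ (reduced) is the least $n\ge 0$ such that the base has an open cover $U_0,\dots,U_n$ admitting maps $s_i$ with $f\circ s_i\simeq$ inclusion. $\mathrm{TC}^{G,k}(X)=\mathrm{secat}(\pi_k)$, $\mathrm{TC}^{G,\infty}(X)=\min_k\mathrm{TC}^{G,k}(X)$. *)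

theory Defs
  imports "HOL-Analysis.Analysis" "HOL-Algebra.Group"
begin

definition top_group :: "('g, 'm) monoid_scheme \<Rightarrow> 'g topology \<Rightarrow> bool" where
  "top_group G TG \<longleftrightarrow> group G \<and> topspace TG = carrier G \<and>
     continuous_map (prod_topology TG TG) TG (\<lambda>(g, h). g \<otimes>\<^bsub>G\<^esub> h) \<and>
     continuous_map TG TG (\<lambda>g. inv\<^bsub>G\<^esub> g)"

definition G_space :: "('g, 'm) monoid_scheme \<Rightarrow> 'g topology \<Rightarrow> 'a topology \<Rightarrow> ('g \<Rightarrow> 'a \<Rightarrow> 'a) \<Rightarrow> bool" where
  "G_space G TG X act \<longleftrightarrow> top_group G TG \<and>
     continuous_map (prod_topology TG X) X (\<lambda>(g, x). act g x) \<and>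
     (\<forall>x\<in>topspace X. act \<one>\<^bsub>G\<^esub> x = x) \<and>
     (\<forall>g\<in>carrier G. \<forall>h\<in>carrier G. \<forall>x\<in>topspace X. act (g \<otimes>\<^bsub>G\<^esub> h) x = act g (act h x))"

definition G_orbit :: "('g, 'm) monoid_scheme \<Rightarrow> ('g \<Rightarrow> 'a \<Rightarrow> 'a) \<Rightarrow> 'a \<Rightarrow> 'a set" where
  "G_orbit G act x = {act g x | g. g \<in> carrier G}"

text \<open>Orbit space X/G with the quotient topology; points are orbits, the orbit map is G_orbit G act.\<close>
definition orbit_space :: "('g, 'm) monoid_scheme \<Rightarrow> ('g \<Rightarrow> 'a \<Rightarrow> 'a) \<Rightarrow> 'a topology \<Rightarrow> 'a set topology" where
  "orbit_space G act X = topology_generated_by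
     {V. V \<subseteq> G_orbit G act ` topspace X \<and> openin X {x \<in> topspace X. G_orbit G act x \<in> V}}"

text \<open>Free path space PX with the compact-open topology; paths are maps [0,1] -> X
  (made extensional so that each path has a unique representative).\<close>
definition path_space :: "'a topology \<Rightarrow> (real \<Rightarrow> 'a) topology" where
  "path_space X = topology_generated_by
     {{g. pathin X g \<and> g \<in> extensional {0..1} \<and> g ` K \<subseteq> U} | K U.
        compact K \<and> K \<subseteq> {0..1} \<and> openin X U}"

definition multipath_space :: "('g, 'm) monoid_scheme \<Rightarrow> ('g \<Rightarrow> 'a \<Rightarrow> 'a) \<Rightarrow> 'a topology \<Rightarrow> nat
    \<Rightarrow> (nat \<Rightarrow> real \<Rightarrow> 'a) topology" where
  "multipath_space G act X k = subtopology (product_topology (\<lambda>i. path_space X) {..<k})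
     {\<gamma>. \<forall>i. Suc i < k \<longrightarrow> G_orbit G act (\<gamma> i 1) = G_orbit G act (\<gamma> (Suc i) 0)}"

definition multipath_proj :: "nat \<Rightarrow> (nat \<Rightarrow> real \<Rightarrow> 'a) \<Rightarrow> 'a \<times> 'a" where
  "multipath_proj k \<gamma> = (\<gamma> 0 0, \<gamma> (k - 1) 1)"

definition secat_le :: "'e topology \<Rightarrow> 'b topology \<Rightarrow> ('e \<Rightarrow> 'b) \<Rightarrow> nat \<Rightarrow> bool" where
  "secat_le E B f n \<longleftrightarrow> (\<exists>U s. (\<forall>i\<le>n. openin B (U i)) \<and> (\<Union>i\<le>n. U i) = topspace B \<and>
     (\<forall>i\<le>n. continuous_map (subtopology B (U i)) E (s i) \<and>
        homotopic_with (\<lambda>_. True) (subtopology B (U i)) B (f \<circ> s i) id))"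

definition secat :: "'e topology \<Rightarrow> 'b topology \<Rightarrow> ('e \<Rightarrow> 'b) \<Rightarrow> enat" where
  "secat E B f = (if \<exists>n. secat_le E B f n then enat (LEAST n. secat_le E B f n) else \<infinity>)"

definition TC_G :: "('g, 'm) monoid_scheme \<Rightarrow> ('g \<Rightarrow> 'a \<Rightarrow> 'a) \<Rightarrow> 'a topology \<Rightarrow> nat \<Rightarrow> enat" where
  "TC_G G act X k = secat (multipath_space G act X k) (prod_topology X X) (multipath_proj k)"

definition TC_G_inf :: "('g, 'm) monoid_scheme \<Rightarrow> ('g \<Rightarrow> 'a \<Rightarrow> 'a) \<Rightarrow> 'a topology \<Rightarrow> enat" where
  "TC_G_inf G act X = (INF k\<in>{1..}. TC_G G act X k)"

end

theory Submission
  imports Defs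
begin

lemma topspace_path_space:
  "topspace (path_space X) = {g. pathin X g \<and> g \<in> extensional {0..1}}"
proof -
  let ?S = "{{g. pathin X g \<and> g \<in> extensional {0..1} \<and> g ` K \<subseteq> U} |K U. compact K \<and> K \<subseteq> {0..1} \<and> openin X U}"
  have mem: "{g. pathin X g \<and> g \<in> extensional {0..1} \<and> g ` {} \<subseteq> topspace X} \<in> ?S"
    by (rule CollectI, rule exI[of _ "{}"], rule exI[of _ "topspace X"]) auto
  have "\<Union> ?S = {g. pathin X g \<and> g \<in> extensional {0..1}}"
  proof (rule equalityI)
    show "{g. pathin X g \<and> g \<in> extensional {0..1}} \<subseteq> \<Union> ?S"
      using mem by blast
  qed auto
  then show ?thesis unfolding path_space_def topology_generated_by_topspace .
qed

lemma eval_continuous: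
  "continuous_map (prod_topology (top_of_set {0..1}) (path_space X)) X (\<lambda>(t,g). g t)"
proof -
  let ?P = "path_space X"
  have img: "(\<lambda>(t,g). g t) ` topspace (prod_topology (top_of_set {0..1}) ?P) \<subseteq> topspace X"
    by (force simp: topspace_path_space pathin_def continuous_map_def Pi_iff)
  show ?thesis unfolding continuous_map
  proof (intro conjI allI impI img)
    fix U assume U: "openin X U"
    let ?W = "{x \<in> topspace (prod_topology (top_of_set {0..1}) ?P). (case x of (t,g) \<Rightarrow> g t) \<in> U}"
    show "openin (prod_topology (top_of_set {0..1}) ?P) ?W"
      unfolding openin_subopen[of _ ?W]
    proof (intro ballI)
      fix z assume z: "z \<in> ?W"
      obtain t0 g0 where z0: "z = (t0,g0)" by fastforce
      have t0: "t0 \<in> {0..1}" and g0: "pathin X g0" "g0 \<in> extensional {0..1}" and gU: "g0 t0 \<in> U"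
        using z z0 by (auto simp: topspace_path_space)
      have "openin (top_of_set {0..1}) {t \<in> topspace (top_of_set {0..1}). g0 t \<in> U}"
        using g0(1) U unfolding pathin_def continuous_map by blast
      then have "openin (top_of_set {0..1}) {t \<in> {0..1}. g0 t \<in> U}" by simp
      then obtain e where e: "e > 0" "\<And>t. t \<in> {0..1} \<Longrightarrow> dist t t0 < e \<Longrightarrow> g0 t \<in> U"
        using t0 gU unfolding openin_euclidean_subtopology_iff by blast
      define K where "K = cball t0 (e/2) \<inter> {0..1::real}"
      have Kc: "compact K" unfolding K_def by (simp add: compact_Int_closed)
      have KU: "g0 ` K \<subseteq> U" using e by (auto simp: K_def dist_commute)
      let ?A = "ball t0 (e/2) \<inter> {0..1::real}"
      let ?B = "{g. pathin X g \<and> g \<in> extensional {0..1} \<and> g ` K \<subseteq> U}"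
      have oA: "openin (top_of_set {0..1}) ?A"
        using openin_open_Int[of "ball t0 (e/2)" "{0..1::real}"] by (simp add: Int_commute)
      have oB: "openin ?P ?B"
        unfolding path_space_def
        by (rule topology_generated_by_Basis) (use Kc U in \<open>auto simp: K_def\<close>)
      show "\<exists>T. openin (prod_topology (top_of_set {0..1}) ?P) T \<and> z \<in> T \<and> T \<subseteq> ?W"
      proof (intro exI conjI)
        show "openin (prod_topology (top_of_set {0..1}) ?P) (?A \<times> ?B)"
          using oA oB by (simp add: openin_prod_Times_iff)
        show "z \<in> ?A \<times> ?B" using z0 t0 g0 KU e by auto
        show "?A \<times> ?B \<subseteq> ?W"
        proof
          fix w assume w: "w \<in> ?A \<times> ?B"
          then obtain t g where wt: "w = (t,g)" "t \<in> ?A" "g \<in> ?B" by blast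
          have "t \<in> K" using wt(2) by (auto simp: K_def)
          then have "g t \<in> U" using wt(3) by blast
          moreover have "w \<in> topspace (prod_topology (top_of_set {0..1}) ?P)"
            using wt by (auto simp: topspace_path_space)
          ultimately show "w \<in> ?W" using wt by auto
        qed
      qed
    qed
  qed
qed


lemma orbit_continuous:
  "continuous_map X (orbit_space G act X) (G_orbit G act)"
  unfolding orbit_space_def
proof (rule continuous_on_generated_topo)
  fix U assume "U \<in> {V. V \<subseteq> G_orbit G act ` topspace X \<and> openin X {x \<in> topspace X. G_orbit G act x \<in> V}}"
  show "openin X (G_orbit G act -` U \<inter> topspace X)"
  proof -
    have "G_orbit G act -` U \<inter> topspace X = {x \<in> topspace X. G_orbit G act x \<in> U}" by blast
    then show ?thesis using \<open>U \<in> _\<close> by simp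
  qed
next
  show "G_orbit G act ` topspace X \<subseteq> \<Union> {V. V \<subseteq> G_orbit G act ` topspace X \<and> openin X {x \<in> topspace X. G_orbit G act x \<in> V}}"
  proof (rule Union_upper)
    have "{x \<in> topspace X. G_orbit G act x \<in> G_orbit G act ` topspace X} = topspace X" by blast
    then show "G_orbit G act ` topspace X \<in> {V. V \<subseteq> G_orbit G act ` topspace X \<and> openin X {x \<in> topspace X. G_orbit G act x \<in> V}}"
      by simp
  qed
qed



theorem mainTheorem6:
  fixes G :: "('g, 'm) monoid_scheme" and TG :: "'g topology"
    and X :: "'a topology" and act :: "'g \<Rightarrow> 'a \<Rightarrow> 'a"
  assumes "G_space G TG X act"
    and "TC_G_inf G act X = 0"
  shows "\<exists>c. homotopic_with (\<lambda>_. True) X (orbit_space G act X) (G_orbit G act) (\<lambda>_. c)"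
proof -
  let ?\<rho> = "G_orbit G act"
  let ?O = "orbit_space G act X"
  let ?B = "prod_topology X X"
  let ?E = "multipath_space G act X"
  have rc: "continuous_map X ?O ?\<rho>" by (rule orbit_continuous)
  obtain k where k1: "k \<ge> 1" and k0: "TC_G G act X k = 0"
  proof (rule ccontr)
    assume "\<not> thesis"
    have "\<forall>k\<in>{1..}. 1 \<le> TC_G G act X k"
    proof
      fix k :: nat assume "k \<in> {1..}"
      then have "TC_G G act X k \<noteq> 0" using that \<open>\<not> thesis\<close> by auto
      then show "1 \<le> TC_G G act X k" by (metis ileI1 not_gr_zero one_eSuc)
    qed
    then have "1 \<le> TC_G_inf G act X" unfolding TC_G_inf_def by (simp add: le_INF_iff)
    then show False using assms(2) by simp
  qed
  have "\<exists>n. secat_le (?E k) ?B (multipath_proj k) n \<and> (LEAST n. secat_le (?E k) ?B (multipath_proj k) n) = 0"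
    using k0 unfolding TC_G_def secat_def by (auto split: if_splits simp: zero_enat_def)
  then have "secat_le (?E k) ?B (multipath_proj k) 0"
    by (metis LeastI)
  then obtain U :: "nat \<Rightarrow> ('a \<times> 'a) set" and s :: "nat \<Rightarrow> 'a \<times> 'a \<Rightarrow> nat \<Rightarrow> real \<Rightarrow> 'a" where
    H: "(\<forall>i\<le>0. openin ?B (U i)) \<and> (\<Union>i\<le>0. U i) = topspace ?B \<and>
     (\<forall>i\<le>0. continuous_map (subtopology ?B (U i)) (?E k) (s i) \<and>
        homotopic_with (\<lambda>_. True) (subtopology ?B (U i)) ?B (multipath_proj k \<circ> s i) id)"
    unfolding secat_le_def by blast
  have U0: "U 0 = topspace ?B" using H[THEN conjunct2, THEN conjunct1] by simp
  have sc0: "continuous_map (subtopology ?B (U 0)) (?E k) (s 0)"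
    using H[THEN conjunct2, THEN conjunct2, rule_format, OF le_refl] by (rule conjunct1)
  have sh0: "homotopic_with (\<lambda>_. True) (subtopology ?B (U 0)) ?B (multipath_proj k \<circ> s 0) id"
    using H[THEN conjunct2, THEN conjunct2, rule_format, OF le_refl] by (rule conjunct2)
  have sub: "subtopology ?B (U 0) = ?B" unfolding U0 by (rule subtopology_topspace)
  obtain \<sigma> where sc: "continuous_map ?B (?E k) \<sigma>"
    and sh: "homotopic_with (\<lambda>_. True) ?B ?B (multipath_proj k \<circ> \<sigma>) id"
    using sc0 sh0 unfolding sub by blast
  show ?thesis
  proof (cases "topspace X = {}")
    case True
    then show ?thesis
      by (intro exI homotopic_with_equal rc) auto
  next
    case False
    then obtain x0 where x0: "x0 \<in> topspace X" by blast
    have jc: "continuous_map X ?B (Pair x0)"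
      using x0 by (intro continuous_intros) auto
    have sc': "continuous_map ?B (product_topology (\<lambda>i. path_space X) {..<k}) \<sigma>"
      using sc unfolding multipath_space_def by (simp add: continuous_map_in_subtopology)
    have mem: "\<And>x i. x \<in> topspace X \<Longrightarrow> Suc i < k \<Longrightarrow> ?\<rho> (\<sigma> (x0,x) i 1) = ?\<rho> (\<sigma> (x0,x) (Suc i) 0)"
    proof -
      fix x i assume x: "x \<in> topspace X" and i: "Suc i < k"
      have "\<sigma> (x0,x) \<in> topspace (?E k)"
        using sc x x0 by (auto dest!: continuous_map_image_subset_topspace)
      then show "?\<rho> (\<sigma> (x0,x) i 1) = ?\<rho> (\<sigma> (x0,x) (Suc i) 0)"
        using i unfolding multipath_space_def by auto
    qed
    have Hi: "homotopic_with (\<lambda>_. True) X ?O (\<lambda>x. ?\<rho> (\<sigma> (x0,x) i 0)) (\<lambda>x. ?\<rho> (\<sigma> (x0,x) i 1))"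
      if i: "i < k" for i
    proof -
      have Fc: "continuous_map X (path_space X) (\<lambda>x. \<sigma> (x0,x) i)"
        using continuous_map_compose[OF continuous_map_compose[OF jc sc']
            continuous_map_product_projection[of i "{..<k}" "\<lambda>i. path_space X"]] i
        by (simp add: o_def)
      have pc: "continuous_map (prod_topology (top_of_set {0..1}) X) (prod_topology (top_of_set {0..1}) (path_space X))
           (\<lambda>(t,x). (t, \<sigma> (x0,x) i))"
        using continuous_map_pairedI[OF continuous_map_fst continuous_map_compose[OF continuous_map_snd Fc]]
        by (simp add: case_prod_unfold o_def)
      have "continuous_map (prod_topology (top_of_set {0..1}) X) ?O (?\<rho> \<circ> (\<lambda>(t,g). g t) \<circ> (\<lambda>(t,x). (t, \<sigma> (x0,x) i)))"
        by (intro continuous_map_compose[OF pc] continuous_map_compose[OF eval_continuous rc])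
      then show ?thesis unfolding homotopic_with_def
        by (intro exI[of _ "?\<rho> \<circ> (\<lambda>(t,g). g t) \<circ> (\<lambda>(t,x). (t, \<sigma> (x0,x) i))"]) auto
    qed
    have chain: "i < k \<Longrightarrow> homotopic_with (\<lambda>_. True) X ?O (\<lambda>x. ?\<rho> (\<sigma> (x0,x) 0 0)) (\<lambda>x. ?\<rho> (\<sigma> (x0,x) i 1))" for i
    proof (induction i)
      case 0 then show ?case using Hi by simp
    next
      case (Suc i)
      then have "homotopic_with (\<lambda>_. True) X ?O (\<lambda>x. ?\<rho> (\<sigma> (x0,x) 0 0)) (\<lambda>x. ?\<rho> (\<sigma> (x0,x) (Suc i) 0))"
        using mem by (intro homotopic_with_eq[OF Suc.IH]) auto
      then show ?case using homotopic_with_trans Hi[OF Suc.prems] by blast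
    qed
    have h1: "homotopic_with (\<lambda>_. True) X ?B ((multipath_proj k \<circ> \<sigma>) \<circ> Pair x0) (id \<circ> Pair x0)"
      by (rule homotopic_with_compose_continuous_map_right[OF sh jc]) auto
    have fc: "continuous_map ?B ?O (?\<rho> \<circ> fst)" by (intro continuous_map_compose[OF continuous_map_fst rc])
    have snc: "continuous_map ?B ?O (?\<rho> \<circ> snd)" by (intro continuous_map_compose[OF continuous_map_snd rc])
    have A: "homotopic_with (\<lambda>_. True) X ?O (\<lambda>x. ?\<rho> (\<sigma> (x0,x) (k-1) 1)) ?\<rho>"
      by (rule homotopic_with_eq[OF homotopic_with_compose_continuous_map_left[OF h1 snc]]) (auto simp: multipath_proj_def)
    have C: "homotopic_with (\<lambda>_. True) X ?O (\<lambda>x. ?\<rho> (\<sigma> (x0,x) 0 0)) (\<lambda>_. ?\<rho> x0)"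
      by (rule homotopic_with_eq[OF homotopic_with_compose_continuous_map_left[OF h1 fc]]) (auto simp: multipath_proj_def)
    have "homotopic_with (\<lambda>_. True) X ?O ?\<rho> (\<lambda>x. ?\<rho> (\<sigma> (x0,x) 0 0))"
      using homotopic_with_trans[OF A[THEN homotopic_with_symD] chain[of "k-1", THEN homotopic_with_symD]] k1
      by simp
    then show ?thesis using homotopic_with_trans[OF _ C] by blast
  qed
qed


end
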